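(* Let $U\subset\mathbb{R}^s$ be open, $X:U\to\mathbb{R}^{n+1}_1$ a spacelike embedding, $M=X(U)$, $n^T$ a smooth future directed unit timelike normal field, $u_0\in U$, $p_0=X(u_0)$, $\xi_0\in N_1(M)_{p_0}[n^T]$, and $n^S$ a local smooth section of $N_1(M)[n^T]$ with $n^S(u_0)=\xi_0$. The following are equivalent: (1) $K_\ell(n^T,n^S)(u_0)=0$ (i.e. $p_0$ is a $(n^T(u_0),\xi_0)$-parabolic point); (2) $\widetilde K_\ell(n^T)(p_0,\xi_0)=0$.
   Context: $\mathbb{R}^{n+1}_1$ is $\mathbb{R}^{n+1}$ with $\langle x,y\rangle=-x_0y_0+\sum_{i=1}^n x_iy_i$; spacelike embedding means tangent spaces consist of vectors with $\langle v,v\rangle>0$. $N_p(M)$ is the pseudo-orthogonal complement of $T_pM$; $n^T(u)\in N_{X(u)}(M)$, $\langle n^T,n^T\rangle=-1$, $n^T_0>0$. $N_1(M)_p[n^T]=\{\xi\in N_p(M):\langle\xi,\xi\rangle=1,\ \langle\xi,n^T(p)\rangle=0\}$, $N_1(M)[n^T]$ the union over $p$. For nonzero lightlike $x$, $\widetilde x=x/x_0$. $\pi^\tau:T_pM\oplus N_p(M)\to T_pM$ the projection; $K_\ell(n^T,n^S)=\det\big(-\pi^\tau\circ d(n^T+n^S)\big)$. $\widetilde{\mathbb{LG}}(n^T)(p,\xi)=\widetilde{n^T(p)+\xi}\in\mathbb{S}^{n-1}_+=\{x:\langle x,x\rangle=0,x_0=1\}$. Identify $T_{(p,\xi)}N_1(M)[n^T]=T_pM\oplus\{\eta\in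 N_p(M):\langle\eta,\xi\rangle=\langle\eta,n^T(p)\rangle=0\}$, so $\mathbb{R}^{n+1}_1=T_{(p,\xi)}N_1(M)[n^T]\oplus\mathrm{span}\{n^T(p),\xi\}$, and let $\Pi^\tau$ be the projection to the first summand. $\widetilde K_\ell(n^T)(p,\xi)=\det\big(-\Pi^\tau\circ d_{(p,\xi)}\widetilde{\mathbb{LG}}(n^T)\big)$. *)

theory Defs
  imports "HOL-Analysis.Analysis"
begin

fun iter_dd :: "'a::real_normed_vector list \<Rightarrow> ('a \<Rightarrow> 'b::real_normed_vector) \<Rightarrow> 'a \<Rightarrow> 'b" where
  "iter_dd [] f = f"
| "iter_dd (v # vs) f = (\<lambda>x. frechet_derivative (iter_dd vs f) (at x) v)"

definition smooth_on :: "'a::real_normed_vector set \<Rightarrow> ('a \<Rightarrow> 'b::real_normed_vector) \<Rightarrow> bool" where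
  "smooth_on S f \<longleftrightarrow> (\<forall>vs. iter_dd vs f differentiable_on S)"

text \<open>R^{n+1} is modelled as real^('n option); the coordinate x_0 is x $ None,
  and x_1..x_n are x $ Some i. So n = CARD('n).\<close>
type_synonym 'n mink = "real ^ ('n option)"

definition lor :: "'n::finite mink \<Rightarrow> 'n mink \<Rightarrow> real" where
  "lor x y = - (x $ None) * (y $ None) + (\<Sum>i\<in>UNIV. (x $ Some i) * (y $ Some i))"

text \<open>For a nonzero lightlike x: x~ = x / x_0.\<close>
definition tld :: "'n::finite mink \<Rightarrow> 'n mink" where
  "tld x = (1 / (x $ None)) *\<^sub>R x"

text \<open>Projection onto V along W (for a direct sum decomposition V + W of the space).\<close>
definition proj_along :: "'a::real_vector set \<Rightarrow> 'a set \<Rightarrow> 'a \<Rightarrow> 'a" where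
  "proj_along V W x = (THE v. v \<in> V \<and> x - v \<in> W)"

text \<open>Determinant of an endomorphism f of a linear subspace V of real^'m:
  extend f by the identity on the Euclidean orthogonal complement of V.\<close>
definition det_on :: "(real ^ 'm::finite) set \<Rightarrow> (real ^ 'm \<Rightarrow> real ^ 'm) \<Rightarrow> real" where
  "det_on V f =
     (let P = proj_along V {y. \<forall>v\<in>V. y \<bullet> v = 0}
      in det (matrix (\<lambda>x. f (P x) + (x - P x))))"

definition tang :: "(real ^ 's::finite \<Rightarrow> 'n::finite mink) \<Rightarrow> real ^ 's \<Rightarrow> 'n mink set" where
  "tang X u = range (frechet_derivative X (at u))"

definition normsp :: "(real ^ 's::finite \<Rightarrow> 'n::finite mink) \<Rightarrow> real ^ 's \<Rightarrow> 'n mink set" where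
  "normsp X u = {y. \<forall>v\<in>tang X u. lor y v = 0}"

definition spacelike_embedding :: "(real ^ 's::finite) set \<Rightarrow> (real ^ 's \<Rightarrow> 'n::finite mink) \<Rightarrow> bool" where
  "spacelike_embedding U X \<longleftrightarrow>
     open U \<and> smooth_on U X \<and> inj_on X U \<and> continuous_on (X ` U) (inv_into U X) \<and>
     (\<forall>u\<in>U. inj (frechet_derivative X (at u))) \<and>
     (\<forall>u\<in>U. \<forall>v\<in>tang X u. v \<noteq> 0 \<longrightarrow> lor v v > 0)"

definition future_unit_timelike_normal ::
    "(real ^ 's::finite) set \<Rightarrow> (real ^ 's \<Rightarrow> 'n::finite mink) \<Rightarrow> (real ^ 's \<Rightarrow> 'n mink) \<Rightarrow> bool" where
  "future_unit_timelike_normal U X nT \<longleftrightarrow>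
     smooth_on U nT \<and>
     (\<forall>u\<in>U. nT u \<in> normsp X u \<and> lor (nT u) (nT u) = -1 \<and> nT u $ None > 0)"

definition N1fib :: "(real ^ 's::finite \<Rightarrow> 'n::finite mink) \<Rightarrow> (real ^ 's \<Rightarrow> 'n mink) \<Rightarrow> real ^ 's \<Rightarrow> 'n mink set" where
  "N1fib X nT u = {\<xi>. \<xi> \<in> normsp X u \<and> lor \<xi> \<xi> = 1 \<and> lor \<xi> (nT u) = 0}"

text \<open>N_1(M)[n^T], parametrised via the embedding X by pairs (u, xi) with p = X u.\<close>
definition N1 :: "(real ^ 's::finite) set \<Rightarrow> (real ^ 's \<Rightarrow> 'n::finite mink) \<Rightarrow> (real ^ 's \<Rightarrow> 'n mink)
    \<Rightarrow> ((real ^ 's) \<times> 'n mink) set" where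
  "N1 U X nT = {(u, \<xi>). u \<in> U \<and> \<xi> \<in> N1fib X nT u}"

definition local_section ::
    "(real ^ 's::finite) set \<Rightarrow> (real ^ 's \<Rightarrow> 'n::finite mink) \<Rightarrow> (real ^ 's \<Rightarrow> 'n mink)
       \<Rightarrow> (real ^ 's) set \<Rightarrow> (real ^ 's \<Rightarrow> 'n mink) \<Rightarrow> bool" where
  "local_section U X nT W nS \<longleftrightarrow>
     open W \<and> W \<subseteq> U \<and> smooth_on W nS \<and> (\<forall>u\<in>W. nS u \<in> N1fib X nT u)"

text \<open>K_l(n^T,n^S)(u) = det(- pi^tau o d(n^T + n^S)) as an endomorphism of T_pM.\<close>
definition K_l :: "(real ^ 's::finite \<Rightarrow> 'n::finite mink) \<Rightarrow> (real ^ 's \<Rightarrow> 'n mink) \<Rightarrow> (real ^ 's \<Rightarrow> 'n mink)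
    \<Rightarrow> real ^ 's \<Rightarrow> real" where
  "K_l X nT nS u =
     (let T = tang X u;
          piT = proj_along T (normsp X u);
          D = frechet_derivative (\<lambda>v. nT v + nS v) (at u);
          dXinv = inv (frechet_derivative X (at u))
      in det_on T (\<lambda>a. - piT (D (dXinv a))))"

text \<open>The (normalised) lightcone Gauss map LG~(n^T)(p, xi) = (n^T(p) + xi)~, written in the
  parameter u (p = X u). The formula defines a smooth map on an open neighbourhood of N_1 in
  real^'s x R^{n+1}, whose derivative restricted to the tangent space of N_1 is the differential.\<close>
definition LGt :: "(real ^ 's::finite \<Rightarrow> 'n::finite mink) \<Rightarrow> (real ^ 's) \<times> 'n mink \<Rightarrow> 'n mink" where
  "LGt nT = (\<lambda>(u, \<xi>). tld (nT u + \<xi>))"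

definition tangent_space :: "'a::real_normed_vector set \<Rightarrow> 'a \<Rightarrow> 'a set" where
  "tangent_space S x = {v. \<exists>\<gamma> e. e > 0 \<and> \<gamma> 0 = x \<and> (\<forall>t\<in>{-e<..<e}. \<gamma> t \<in> S) \<and>
                            (\<gamma> has_vector_derivative v) (at 0)}"

text \<open>K~_l(n^T)(p, xi) with p = X u: determinant of - Pi^tau o dLG~ on
  T_(p,xi) N_1 = T_pM (+) E, E = {eta in N_p. <eta,xi> = <eta,n^T(p)> = 0}. A tangent vector
  (w, b) of N_1 (w the u-component, b the xi-component) is identified with dX_u(w) + (E-part of b).\<close>
definition Kt_l :: "(real ^ 's::finite) set \<Rightarrow> (real ^ 's \<Rightarrow> 'n::finite mink) \<Rightarrow> (real ^ 's \<Rightarrow> 'n mink)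
    \<Rightarrow> real ^ 's \<Rightarrow> 'n mink \<Rightarrow> real" where
  "Kt_l U X nT u \<xi> =
     (let T = tang X u;
          E = {\<eta>. \<eta> \<in> normsp X u \<and> lor \<eta> \<xi> = 0 \<and> lor \<eta> (nT u) = 0};
          projE = proj_along E {y. \<forall>e\<in>E. lor y e = 0};
          V = {a + \<eta> | a \<eta>. a \<in> T \<and> \<eta> \<in> E};
          PiT = proj_along V (span {nT u, \<xi>});
          TN = tangent_space (N1 U X nT) (u, \<xi>);
          iota = (\<lambda>(w, b). frechet_derivative X (at u) w + projE b);
          dLG = frechet_derivative (LGt nT) (at (u, \<xi>))
      in det_on V (\<lambda>x. - PiT (dLG (inv_into TN iota x))))"

end

theory Submission
  imports Defs
begin


definition Jm :: "'n::finite mink \<Rightarrow> 'n mink" where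
  "Jm x = (\<chi> i. if i = None then - (x $ i) else x $ i)"

lemma lor_inner: "lor x y = x \<bullet> Jm y"
proof -
  have U: "(UNIV :: 'n option set) = insert None (range Some)"
    by (metis UNIV_option_conv)
  show ?thesis
    unfolding lor_def inner_vec_def Jm_def U
    by (simp add: sum.reindex)
qed

lemma linear_Jm: "linear Jm"
  by (rule linearI) (auto simp: Jm_def vec_eq_iff)

lemma lor_sym: "lor x y = lor y x"
  unfolding lor_def by (simp add: mult.commute)

lemma bl_lor: "bounded_bilinear lor"
proof -
  have bJ: "bounded_linear Jm" using linear_Jm linear_conv_bounded_linear by blast
  have bb: "bounded_bilinear (\<lambda>x y. x \<bullet> Jm y)"
    by (rule bounded_bilinear.comp[OF bounded_bilinear_inner bounded_linear_ident bJ])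
  have eq: "lor = (\<lambda>x y. x \<bullet> Jm y)" by (intro ext) (rule lor_inner)
  show ?thesis by (subst eq) (rule bb)
qed

lemma lor_add_left: "lor (x + y) z = lor x z + lor y z"
  by (simp add: lor_inner inner_add_left)
lemma lor_add_right: "lor z (x + y) = lor z x + lor z y"
  by (metis lor_add_left lor_sym)
lemma lor_diff_left: "lor (x - y) z = lor x z - lor y z"
  by (simp add: lor_inner inner_diff_left)
lemma lor_diff_right: "lor z (x - y) = lor z x - lor z y"
  by (metis lor_diff_left lor_sym)
lemma lor_scale_left: "lor (c *\<^sub>R x) z = c * lor x z"
  by (simp add: lor_inner)
lemma lor_scale_right: "lor z (c *\<^sub>R x) = c * lor z x"
  by (metis lor_scale_left lor_sym)
lemma lor_minus_left: "lor (- x) z = - lor x z"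
  by (simp add: lor_inner)
lemma lor_minus_right: "lor z (- x) = - lor z x"
  by (metis lor_minus_left lor_sym)
lemma lor_zero_left[simp]: "lor 0 z = 0" by (simp add: lor_inner)
lemma lor_zero_right[simp]: "lor z 0 = 0" by (metis lor_zero_left lor_sym)
lemma lor_sum_left: "lor (\<Sum>i\<in>A. f i) z = (\<Sum>i\<in>A. lor (f i) z)"
  by (simp add: lor_inner inner_sum_left)
lemma lor_sum_right: "lor z (\<Sum>i\<in>A. f i) = (\<Sum>i\<in>A. lor z (f i))"
  by (simp add: lor_inner linear_sum[OF linear_Jm] inner_sum_right)

lemmas lor_simps = lor_add_left lor_add_right lor_diff_left lor_diff_right lor_scale_left
  lor_scale_right lor_minus_left lor_minus_right lor_sum_left lor_sum_right

lemma subspace_lor_orth: "subspace {z. \<forall>e\<in>A. lor z e = 0}"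
  unfolding subspace_def by (auto simp: lor_simps)

lemma subspace_lor_orth1: "subspace {z. lor z e = 0}"
  unfolding subspace_def by (auto simp: lor_simps)


lemma proj_along_eqI:
  assumes "v \<in> A" "x - v \<in> B" "\<And>v'. v' \<in> A \<Longrightarrow> x - v' \<in> B \<Longrightarrow> v' = v"
  shows "proj_along A B x = v"
  unfolding proj_along_def
proof (rule the_equality)
  show "v \<in> A \<and> x - v \<in> B" using assms(1,2) by blast
  fix v' assume "v' \<in> A \<and> x - v' \<in> B" then show "v' = v" using assms(3) by blast
qed

lemma det_on_zero_iff:
  fixes V :: "(real^'m::finite) set" and F f :: "real^'m \<Rightarrow> real^'m"
  assumes V: "subspace V" and F: "linear F" and FV: "\<And>x. x \<in> V \<Longrightarrow> F x \<in> V"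
    and fF: "\<And>x. x \<in> V \<Longrightarrow> f x = F x"
  shows "det_on V f = 0 \<longleftrightarrow> (\<exists>x\<in>V. x \<noteq> 0 \<and> F x = 0)"
proof -
  define Vp where "Vp = {y. \<forall>v\<in>V. y \<bullet> v = 0}"
  have Vp: "subspace Vp" unfolding Vp_def subspace_def
    by (auto simp: inner_add_left)
  have ex: "\<exists>p. p \<in> V \<and> x - p \<in> Vp" for x
  proof -
    obtain y z where "y \<in> span V" "\<And>w. w \<in> span V \<Longrightarrow> orthogonal z w" "x = y + z"
      using orthogonal_subspace_decomp_exists [of V x] by blast
    moreover have "span V = V" using V by simp
    ultimately have "y \<in> V" "\<forall>v\<in>V. z \<bullet> v = 0" "x - y = z"
      unfolding orthogonal_def by auto
    then show ?thesis unfolding Vp_def by blast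
  qed
  have uniq: "p = p'" if "p \<in> V" "x - p \<in> Vp" "p' \<in> V" "x - p' \<in> Vp" for x p p'
  proof -
    have a: "p - p' \<in> V" by (rule subspace_diff[OF V that(1) that(3)])
    have b: "(x - p') - (x - p) \<in> Vp" by (rule subspace_diff[OF Vp that(4) that(2)])
    have e: "(x - p') - (x - p) = p - p'" by simp
    have "p - p' \<in> Vp" using b unfolding e .
    then have "(p - p') \<bullet> (p - p') = 0" using a unfolding Vp_def by blast
    then show ?thesis by simp
  qed
  define P where "P = proj_along V Vp"
  have P: "P x \<in> V \<and> x - P x \<in> Vp" for x
  proof -
    obtain p where p: "p \<in> V \<and> x - p \<in> Vp" using ex by blast
    have "\<exists>!p. p \<in> V \<and> x - p \<in> Vp"
      by (rule ex1I[of _ p]) (use p uniq in auto)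
    then show ?thesis unfolding P_def proj_along_def by (rule theI')
  qed
  have Peq: "P x = p" if "p \<in> V" "x - p \<in> Vp" for x p
    using uniq[of "P x" x p] P[of x] that by blast
  have linP: "linear P"
  proof (rule linearI)
    fix x y
    have e: "(x + y) - (P x + P y) = (x - P x) + (y - P y)" by simp
    have "(x - P x) + (y - P y) \<in> Vp" using P[of x] P[of y] subspace_add[OF Vp] by blast
    moreover have "P x + P y \<in> V" using P[of x] P[of y] subspace_add[OF V] by blast
    ultimately show "P (x + y) = P x + P y" using e Peq by metis
  next
    fix c :: real and x
    have e: "c *\<^sub>R x - c *\<^sub>R P x = c *\<^sub>R (x - P x)" by (simp add: scaleR_diff_right)
    have "c *\<^sub>R (x - P x) \<in> Vp" using P[of x] subspace_scale[OF Vp] by blast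
    moreover have "c *\<^sub>R P x \<in> V" using P[of x] subspace_scale[OF V] by blast
    ultimately show "P (c *\<^sub>R x) = c *\<^sub>R P x" using e Peq by metis
  qed
  define h where "h x = F (P x) + (x - P x)" for x
  have l1: "linear (\<lambda>x. F (P x))" using linear_compose[OF linP F] by (simp add: o_def)
  have l2: "linear (\<lambda>x. x - P x)" by (rule linear_compose_sub[OF linear_ident linP])
  have linh: "linear h" unfolding h_def by (rule linear_compose_add[OF l1 l2])
  have gh: "(\<lambda>x. f (P x) + (x - P x)) = h" unfolding h_def using fF P by auto
  have dv: "det_on V f = det (matrix h)"
    unfolding det_on_def Let_def Vp_def[symmetric] P_def[symmetric] gh ..
  have "inj h \<longleftrightarrow> (\<forall>x. h x = 0 \<longrightarrow> x = 0)"
    using linh by (simp add: linear_injective_0)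
  also have "\<dots> \<longleftrightarrow> \<not> (\<exists>x\<in>V. x \<noteq> 0 \<and> F x = 0)"
  proof
    assume H: "\<forall>x. h x = 0 \<longrightarrow> x = 0"
    show "\<not> (\<exists>x\<in>V. x \<noteq> 0 \<and> F x = 0)"
    proof
      assume "\<exists>x\<in>V. x \<noteq> 0 \<and> F x = 0"
      then obtain x where x: "x \<in> V" "x \<noteq> 0" "F x = 0" by blast
      have "P x = x" using Peq[of x x] x V Vp by (simp add: subspace_0)
      then have "h x = 0" using x unfolding h_def by simp
      then show False using H x by blast
    qed
  next
    assume H: "\<not> (\<exists>x\<in>V. x \<noteq> 0 \<and> F x = 0)"
    show "\<forall>x. h x = 0 \<longrightarrow> x = 0"
    proof (intro allI impI)
      fix x assume hx: "h x = 0"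
      have a: "F (P x) \<in> V" using FV P by blast
      have b: "x - P x \<in> Vp" using P by blast
      have c: "x - P x = - F (P x)" using hx unfolding h_def by (simp add: algebra_simps)
      have "(x - P x) \<bullet> F (P x) = 0" using a b unfolding Vp_def by blast
      then have "(x - P x) \<bullet> (x - P x) = 0" using c by (simp add: inner_minus_right)
      then have d: "x = P x" by simp
      then have "F (P x) = 0" using c by simp
      then have "P x = 0" using H P by blast
      then show "x = 0" using d by simp
    qed
  qed
  finally have "inj h \<longleftrightarrow> \<not> (\<exists>x\<in>V. x \<noteq> 0 \<and> F x = 0)" .
  moreover have "det (matrix h) \<noteq> 0 \<longleftrightarrow> inj h" by (rule det_nz_iff_inj[OF linh])
  ultimately show ?thesis unfolding dv by argo
qed


lemma continuous_det:
  fixes A :: "'a::t2_space \<Rightarrow> real^'m::finite^'m"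
  assumes "\<And>i j. continuous F (\<lambda>t. A t $ i $ j)"
  shows "continuous F (\<lambda>t. det (A t))"
  unfolding det_def by (intro continuous_intros assms)

lemma smooth_diff_at:
  assumes "smooth_on S f" "open S" "x \<in> S"
  shows "(iter_dd vs f) differentiable (at x)"
  using assms unfolding smooth_on_def
  by (meson differentiable_on_eq_differentiable_at)

lemma lin_expand:
  fixes c :: "real^'s::finite"
  assumes "linear L"
  shows "L c = (\<Sum>j\<in>UNIV. c $ j *\<^sub>R L (axis j 1))"
proof -
  have "(\<Sum>j\<in>UNIV. c $ j *\<^sub>R axis j 1) = c"
    using basis_expansion[of c] unfolding scalar_mult_eq_scaleR .
  then have "L c = L (\<Sum>j\<in>UNIV. c $ j *\<^sub>R axis j 1)" by simp
  also have "\<dots> = (\<Sum>j\<in>UNIV. L (c $ j *\<^sub>R axis j 1))"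
    by (rule linear_sum[OF assms])
  also have "\<dots> = (\<Sum>j\<in>UNIV. c $ j *\<^sub>R L (axis j 1))"
    by (rule sum.cong[OF refl]) (rule linear_scale[OF assms])
  finally show ?thesis .
qed

locale cs =
  fixes U :: "(real ^ 's::finite) set"
    and X :: "real ^ 's \<Rightarrow> real ^ ('n::finite option)"
    and nT nS :: "real ^ 's \<Rightarrow> real ^ ('n option)"
    and W :: "(real ^ 's) set"
    and u0 :: "real ^ 's"
    and \<xi>0 :: "real ^ ('n option)"
  assumes emb: "spacelike_embedding U X"
    and fut: "future_unit_timelike_normal U X nT"
    and u0U: "u0 \<in> U"
    and xi0: "\<xi>0 \<in> N1fib X nT u0"
    and sec: "local_section U X nT W nS"
    and u0W: "u0 \<in> W"
    and nS0: "nS u0 = \<xi>0"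
begin

definition "Xd u = frechet_derivative X (at u)"
definition "Xi u i = Xd u (axis i 1)"
definition "G u = (\<chi> i j. lor (Xi u i) (Xi u j))"
definition "rr u y = (\<chi> i. lor y (Xi u i))"
definition "cc u y = (\<chi> k. det (\<chi> i j. if j = k then rr u y $ i else G u $ i $ j) / det (G u))"
definition "tp u y = Xd u (cc u y)"

lemma openU: "open U" and smX: "smooth_on U X" and injX: "\<And>u. u \<in> U \<Longrightarrow> inj (Xd u)"
  and spl: "\<And>u v. u \<in> U \<Longrightarrow> v \<in> tang X u \<Longrightarrow> v \<noteq> 0 \<Longrightarrow> lor v v > 0"
  using emb unfolding spacelike_embedding_def Xd_def by auto

lemma smT: "smooth_on U nT" and nTn: "\<And>u. u \<in> U \<Longrightarrow> nT u \<in> normsp X u"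
  and nTu: "\<And>u. u \<in> U \<Longrightarrow> lor (nT u) (nT u) = -1" and nT0: "\<And>u. u \<in> U \<Longrightarrow> nT u $ None > 0"
  using fut unfolding future_unit_timelike_normal_def by auto

lemma openW: "open W" and WU: "W \<subseteq> U" and smS: "smooth_on W nS"
  and nSf: "\<And>u. u \<in> W \<Longrightarrow> nS u \<in> N1fib X nT u"
  using sec unfolding local_section_def by auto

lemma X_der: "u \<in> U \<Longrightarrow> (X has_derivative Xd u) (at u)"
  using smooth_diff_at[OF smX openU, of u "[]"] frechet_derivative_works unfolding Xd_def by auto

lemma linXd: "u \<in> U \<Longrightarrow> linear (Xd u)"
  using X_der has_derivative_linear by blast

lemma tang_eq: "tang X u = range (Xd u)"
  unfolding tang_def Xd_def ..

lemma Xd_expand: "u \<in> U \<Longrightarrow> Xd u c = (\<Sum>j\<in>UNIV. c $ j *\<^sub>R Xi u j)"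
  unfolding Xi_def using lin_expand[OF linXd] by blast

lemma normsp_iff: "u \<in> U \<Longrightarrow> y \<in> normsp X u \<longleftrightarrow> (\<forall>i. lor y (Xi u i) = 0)"
proof
  assume "u \<in> U" "y \<in> normsp X u" then show "\<forall>i. lor y (Xi u i) = 0"
    unfolding normsp_def tang_eq Xi_def by auto
next
  assume u: "u \<in> U" and H: "\<forall>i. lor y (Xi u i) = 0"
  show "y \<in> normsp X u" unfolding normsp_def tang_eq
    using H by (auto simp: Xd_expand[OF u] lor_simps)
qed

lemma subspace_normsp: "subspace (normsp X u)"
  unfolding normsp_def using subspace_lor_orth by blast

lemma G_mult: "u \<in> U \<Longrightarrow> G u *v c = (\<chi> i. lor (Xi u i) (Xd u c))"
  by (simp add: vec_eq_iff matrix_vector_mult_def G_def Xd_expand lor_simps mult.commute)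

lemma detG: assumes u: "u \<in> U" shows "det (G u) \<noteq> 0"
proof -
  have "inj ((*v) (G u))"
  proof (subst linear_injective_0)
    show "linear ((*v) (G u))" by (rule matrix_vector_mul_linear)
    show "\<forall>x. G u *v x = 0 \<longrightarrow> x = 0"
    proof (intro allI impI)
      fix c assume "G u *v c = 0"
      then have "\<forall>i. lor (Xi u i) (Xd u c) = 0" by (simp add: G_mult[OF u] vec_eq_iff)
      then have "lor (Xd u c) (Xd u c) = 0"
        by (subst (1) Xd_expand[OF u]) (simp add: lor_simps)
      then have "Xd u c = 0" using spl[OF u, of "Xd u c"] by (auto simp: tang_eq)
      then show "c = 0" using injX[OF u] linXd[OF u]
        by (simp add: linear_injective_0)
    qed
  qed
  then show ?thesis using det_nz_iff_inj[OF matrix_vector_mul_linear, of "G u"] by simp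
qed

lemma cc_sol: "u \<in> U \<Longrightarrow> G u *v cc u y = rr u y"
  using cramer[OF detG] unfolding cc_def by blast

lemma tp_tang: "u \<in> U \<Longrightarrow> tp u y \<in> tang X u"
  unfolding tp_def tang_eq by simp

lemma tp_normal: assumes u: "u \<in> U" shows "y - tp u y \<in> normsp X u"
proof -
  have "\<forall>i. lor (Xi u i) (tp u y) = lor y (Xi u i)"
    using cc_sol[OF u, of y] unfolding tp_def by (simp add: G_mult[OF u] rr_def vec_eq_iff)
  then show ?thesis using u by (simp add: normsp_iff lor_simps lor_sym)
qed

lemma tp_sum: "u \<in> U \<Longrightarrow> tp u y = (\<Sum>k\<in>UNIV. cc u y $ k *\<^sub>R Xi u k)"
  unfolding tp_def by (rule Xd_expand)

lemma TN_zero: "u \<in> U \<Longrightarrow> a \<in> tang X u \<Longrightarrow> a \<in> normsp X u \<Longrightarrow> a = 0"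
  using spl unfolding normsp_def by fastforce

end


lemma timelike_orth:
  fixes n v :: "'n::finite mink"
  assumes nn: "lor n n = -1" and vn: "lor v n = 0" and vv: "lor v v \<le> 0"
  shows "v = 0"
proof -
  define a where "a = n $ None"
  define c where "c = v $ None"
  define bb :: "real^'n" where "bb = (\<chi> i. n $ Some i)"
  define ww :: "real^'n" where "ww = (\<chi> i. v $ Some i)"
  have l: "lor x y = - (x $ None) * (y $ None) + (\<chi> i. x $ Some i) \<bullet> (\<chi> i. y $ Some i)" for x y :: "'n mink"
    unfolding lor_def inner_vec_def by simp
  have e1: "- a * a + bb \<bullet> bb = -1" using nn l[of n n] unfolding a_def bb_def by simp
  have e2: "- c * a + ww \<bullet> bb = 0" using vn l[of v n] unfolding a_def c_def bb_def ww_def by simp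
  have e3: "- c * c + ww \<bullet> ww \<le> 0" using vv l[of v v] unfolding c_def ww_def by simp
  have cs: "(ww \<bullet> bb)\<^sup>2 \<le> ww \<bullet> ww * (bb \<bullet> bb)" by (rule Cauchy_Schwarz_ineq)
  have S0: "ww \<bullet> ww \<ge> 0" by simp
  have bbv: "bb \<bullet> bb = a * a - 1" using e1 by simp
  have wbv: "ww \<bullet> bb = c * a" using e2 by simp
  have h1: "c * c * (a * a) \<le> ww \<bullet> ww * (a * a) - ww \<bullet> ww"
    using cs unfolding bbv wbv by (simp add: power2_eq_square algebra_simps)
  have h2: "ww \<bullet> ww * (a*a) \<le> (c * c) * (a * a)"
    using e3 by (intro mult_right_mono) auto
  have "ww \<bullet> ww \<le> 0" using h1 h2 by linarith
  then have w0: "ww = 0" using S0 by simp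
  then have ca: "c * a = 0" using e2 by simp
  have "bb \<bullet> bb \<ge> 0" by simp
  then have "a * a \<ge> 1" using e1 by linarith
  then have "a \<noteq> 0" by auto
  then have c0: "c = 0" using ca by simp
  have "v $ i = 0" for i
  proof (cases i)
    case None then show ?thesis using c0 c_def by simp
  next
    case (Some j) then show ?thesis using w0 unfolding ww_def by (simp add: vec_eq_iff)
  qed
  then show ?thesis by (simp add: vec_eq_iff)
qed

context cs begin

definition "T0 = tang X u0"
definition "N0 = normsp X u0"
definition "n0 = nT u0"
definition "E0 = {\<eta>. \<eta> \<in> N0 \<and> lor \<eta> \<xi>0 = 0 \<and> lor \<eta> n0 = 0}"
definition "pT y = tp u0 y"
definition "ee y = (let m = y - pT y in m + lor m n0 *\<^sub>R n0 - lor m \<xi>0 *\<^sub>R \<xi>0)"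
definition "V0 = {a + \<eta> | a \<eta>. a \<in> T0 \<and> \<eta> \<in> E0}"

lemma xi0N: "\<xi>0 \<in> N0" and xi0u: "lor \<xi>0 \<xi>0 = 1" and xi0n: "lor \<xi>0 n0 = 0"
  using xi0 unfolding N1fib_def N0_def n0_def by auto
lemma n0N: "n0 \<in> N0" and n0u: "lor n0 n0 = -1"
  using nTn[OF u0U] nTu[OF u0U] unfolding N0_def n0_def by auto

lemma subT0: "subspace T0"
  unfolding T0_def tang_eq subspace_def
proof (intro conjI ballI allI)
  have l: "linear (Xd u0)" by (rule linXd[OF u0U])
  show "0 \<in> range (Xd u0)" using linear_0[OF l] by (metis rangeI)
  fix x y assume "x \<in> range (Xd u0)" "y \<in> range (Xd u0)"
  then obtain a b where "x = Xd u0 a" "y = Xd u0 b" by blast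
  then show "x + y \<in> range (Xd u0)" using linear_add[OF l, of a b] by (metis rangeI)
next
  have l: "linear (Xd u0)" by (rule linXd[OF u0U])
  fix c :: real and x assume "x \<in> range (Xd u0)"
  then obtain a where "x = Xd u0 a" by blast
  then show "c *\<^sub>R x \<in> range (Xd u0)" using linear_scale[OF l, of c a] by (metis rangeI)
qed

lemma subN0: "subspace N0" unfolding N0_def by (rule subspace_normsp)

lemma subE0: "subspace E0"
  unfolding E0_def subspace_def using subN0
  by (auto simp: lor_simps subspace_0 subspace_add subspace_scale)

lemma E0_N0: "\<eta> \<in> E0 \<Longrightarrow> \<eta> \<in> N0" unfolding E0_def by auto

lemma TN0: "a \<in> T0 \<Longrightarrow> a \<in> N0 \<Longrightarrow> a = 0"
  using TN_zero[OF u0U] unfolding T0_def N0_def by blast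

lemma N0_orth: "a \<in> T0 \<Longrightarrow> m \<in> N0 \<Longrightarrow> lor m a = 0"
  unfolding T0_def N0_def normsp_def by auto

lemma pT_T: "pT y \<in> T0" and pT_N: "y - pT y \<in> N0"
  unfolding pT_def T0_def N0_def using tp_tang[OF u0U] tp_normal[OF u0U] by auto

lemma pT_unique: assumes "a \<in> T0" "y - a \<in> N0" shows "pT y = a"
proof -
  have "pT y - a \<in> T0" using assms pT_T subT0 by (simp add: subspace_diff)
  moreover have "pT y - a = (y - a) - (y - pT y)" by simp
  then have "pT y - a \<in> N0" using assms pT_N subN0 by (metis subspace_diff)
  ultimately show ?thesis using TN0 by fastforce
qed

lemma lin_pT: "linear pT"
proof (rule linearI)
  fix x y
  show "pT (x + y) = pT x + pT y"
    using pT_T[of x] pT_T[of y] pT_N[of x] pT_N[of y] subT0 subN0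
    by (intro pT_unique) (auto simp: subspace_add dest: subspace_add[of N0 "x - pT x" "y - pT y"]
          simp: algebra_simps)
next
  fix c :: real and x
  show "pT (c *\<^sub>R x) = c *\<^sub>R pT x"
    using pT_T[of x] pT_N[of x] subT0 subN0
    by (intro pT_unique) (auto simp: subspace_scale dest: subspace_scale[of N0 "x - pT x" c]
          simp: algebra_simps)
qed

lemma pT_T_id: "a \<in> T0 \<Longrightarrow> pT a = a"
  using pT_unique subN0 by (simp add: subspace_0)
lemma pT_N_0: "m \<in> N0 \<Longrightarrow> pT m = 0"
  using pT_unique subT0 by (simp add: subspace_0)

lemma ee_alt: "ee y = (y - pT y) + lor (y - pT y) n0 *\<^sub>R n0 - lor (y - pT y) \<xi>0 *\<^sub>R \<xi>0"
  unfolding ee_def Let_def ..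

lemma lin_ee: "linear ee"
proof (rule linearI)
  fix x y
  show "ee (x + y) = ee x + ee y" unfolding ee_alt
    by (simp add: linear_add[OF lin_pT] lor_simps scaleR_add_left scaleR_diff_left algebra_simps)
next
  fix c :: real and x
  show "ee (c *\<^sub>R x) = c *\<^sub>R ee x" unfolding ee_alt
    by (simp add: linear_scale[OF lin_pT] lor_simps scaleR_diff_right scaleR_add_right algebra_simps)
qed

lemma ee_E: "ee y \<in> E0"
proof -
  define m where "m = y - pT y"
  have m: "m \<in> N0" using pT_N m_def by simp
  have "ee y = m + lor m n0 *\<^sub>R n0 - lor m \<xi>0 *\<^sub>R \<xi>0" using ee_alt m_def by simp
  moreover have "m + lor m n0 *\<^sub>R n0 - lor m \<xi>0 *\<^sub>R \<xi>0 \<in> N0"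
    using m n0N xi0N subN0 by (intro subspace_diff subspace_add subspace_scale) auto
  moreover have "lor (m + lor m n0 *\<^sub>R n0 - lor m \<xi>0 *\<^sub>R \<xi>0) \<xi>0 = 0"
    using xi0u xi0n by (simp add: lor_simps lor_sym[of n0 \<xi>0])
  moreover have "lor (m + lor m n0 *\<^sub>R n0 - lor m \<xi>0 *\<^sub>R \<xi>0) n0 = 0"
    using xi0n n0u by (simp add: lor_simps)
  ultimately show ?thesis unfolding E0_def by simp
qed

lemma ee_E_id: "\<eta> \<in> E0 \<Longrightarrow> ee \<eta> = \<eta>"
  using pT_N_0[OF E0_N0] unfolding ee_alt E0_def by simp

lemma ee_N: "m \<in> N0 \<Longrightarrow> ee m = m + lor m n0 *\<^sub>R n0 - lor m \<xi>0 *\<^sub>R \<xi>0"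
  using pT_N_0 unfolding ee_alt by simp

lemma ee_T: "a \<in> T0 \<Longrightarrow> ee a = 0"
  using pT_T_id unfolding ee_alt by simp

lemma ee_n0: "ee n0 = 0" using ee_N[OF n0N] n0u xi0n by (simp add: lor_sym[of n0 \<xi>0])
lemma ee_xi0: "ee \<xi>0 = 0" using ee_N[OF xi0N] xi0u xi0n by simp

lemma E_spacelike: "\<eta> \<in> E0 \<Longrightarrow> lor \<eta> \<eta> \<le> 0 \<Longrightarrow> \<eta> = 0"
  using timelike_orth[OF n0u] unfolding E0_def by blast

lemma projE_eq: "proj_along E0 {y. \<forall>e\<in>E0. lor y e = 0} y = ee y"
proof (rule proj_along_eqI)
  show "ee y \<in> E0" by (rule ee_E)
  define m where "m = y - pT y"
  have m: "m \<in> N0" using pT_N m_def by simp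
  have "y - ee y = pT y - lor m n0 *\<^sub>R n0 + lor m \<xi>0 *\<^sub>R \<xi>0"
    unfolding ee_alt m_def by (simp add: algebra_simps)
  moreover have "lor (pT y - lor m n0 *\<^sub>R n0 + lor m \<xi>0 *\<^sub>R \<xi>0) e = 0" if e: "e \<in> E0" for e
  proof -
    have "lor e (pT y) = 0" using N0_orth[OF pT_T E0_N0[OF e]] .
    moreover have "lor e n0 = 0" "lor e \<xi>0 = 0" using e unfolding E0_def by auto
    ultimately show ?thesis by (simp add: lor_simps lor_sym[of "pT y"] lor_sym[of n0] lor_sym[of \<xi>0])
  qed
  ultimately show "y - ee y \<in> {y. \<forall>e\<in>E0. lor y e = 0}" by simp
  fix v assume v: "v \<in> E0" "y - v \<in> {y. \<forall>e\<in>E0. lor y e = 0}"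
  have d: "v - ee y \<in> E0" using v ee_E subE0 by (simp add: subspace_diff)
  have h1: "lor (y - v) (v - ee y) = 0" using v(2) d by blast
  have h2: "lor (y - ee y) (v - ee y) = 0" using \<open>y - ee y \<in> _\<close> d by blast
  have "v - ee y = (y - ee y) - (y - v)" by simp
  then have "lor (v - ee y) (v - ee y) = lor (y - ee y) (v - ee y) - lor (y - v) (v - ee y)"
    by (metis lor_diff_left)
  then have "lor (v - ee y) (v - ee y) = 0" using h1 h2 by simp
  then show "v = ee y" using E_spacelike[OF d] by simp
qed

lemma subV0: "subspace V0" unfolding V0_def using subspace_sums[OF subT0 subE0] .

lemma span_N0: "span {n0, \<xi>0} \<subseteq> N0"
proof (rule span_minimal[OF _ subN0])
  show "{n0, \<xi>0} \<subseteq> N0" using n0N xi0N by simp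
qed

lemma span_E_orth: assumes "\<eta> \<in> E0" "z \<in> span {n0, \<xi>0}" shows "lor \<eta> z = 0"
proof -
  have s: "subspace {z. lor \<eta> z = 0}" unfolding subspace_def by (simp add: lor_simps)
  have "{n0, \<xi>0} \<subseteq> {z. lor \<eta> z = 0}" using assms(1) unfolding E0_def by simp
  then have "span {n0, \<xi>0} \<subseteq> {z. lor \<eta> z = 0}" by (rule span_minimal[OF _ s])
  then show ?thesis using assms(2) by blast
qed

lemma PiT_eq: "proj_along V0 (span {n0, \<xi>0}) y = pT y + ee y"
proof (rule proj_along_eqI)
  show V: "pT y + ee y \<in> V0" using pT_T[of y] ee_E[of y] unfolding V0_def by auto
  define m where "m = y - pT y"
  have "y - (pT y + ee y) = - lor m n0 *\<^sub>R n0 + lor m \<xi>0 *\<^sub>R \<xi>0"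
    unfolding ee_alt m_def by (simp add: algebra_simps)
  moreover have "- lor m n0 *\<^sub>R n0 + lor m \<xi>0 *\<^sub>R \<xi>0 \<in> span {n0, \<xi>0}"
    by (intro span_add span_scale span_base) auto
  ultimately show sp: "y - (pT y + ee y) \<in> span {n0, \<xi>0}" by simp
  fix v assume v: "v \<in> V0" "y - v \<in> span {n0, \<xi>0}"
  have d: "v - (pT y + ee y) \<in> V0" by (rule subspace_diff[OF subV0 v(1) V])
  have ds0: "(y - (pT y + ee y)) - (y - v) \<in> span {n0, \<xi>0}" by (rule span_diff[OF sp v(2)])
  have eqd: "(y - (pT y + ee y)) - (y - v) = v - (pT y + ee y)" by simp
  have ds: "v - (pT y + ee y) \<in> span {n0, \<xi>0}" using ds0 unfolding eqd .
  obtain a \<eta> where a: "a \<in> T0" "\<eta> \<in> E0" "v - (pT y + ee y) = a + \<eta>" using d unfolding V0_def by blast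
  have ae: "a = (v - (pT y + ee y)) - \<eta>" using a by simp
  have dN: "v - (pT y + ee y) \<in> N0" using ds span_N0 by blast
  have "(v - (pT y + ee y)) - \<eta> \<in> N0" by (rule subspace_diff[OF subN0 dN E0_N0[OF a(2)]])
  then have "a \<in> N0" using ae by simp
  then have a0: "a = 0" using TN0 a by blast
  then have "lor \<eta> \<eta> = 0" using span_E_orth[OF a(2)] ds a by simp
  then have "\<eta> = 0" using E_spacelike a by simp
  then show "v = pT y + ee y" using a a0 by simp
qed

lemma piT_eq: "proj_along T0 N0 y = pT y"
  by (rule proj_along_eqI[OF pT_T pT_N]) (rule pT_unique[symmetric])

end


lemma zero_deriv:
  fixes h :: "real \<Rightarrow> 'b::real_normed_vector"
  assumes hd: "(h has_derivative h') (at 0)" and e: "e > 0" and z: "\<And>t. \<bar>t\<bar> < e \<Longrightarrow> h t = 0"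
  shows "h' = (\<lambda>_. 0)"
proof -
  have "((\<lambda>_. 0) has_derivative h') (at 0)"
  proof (rule has_derivative_transform_within_open[OF hd, of "ball 0 e"])
    show "open (ball (0::real) e)" by simp
    show "(0::real) \<in> ball 0 e" using e by simp
    fix x :: real assume "x \<in> ball 0 e" then show "h x = 0" using z by (simp add: dist_real_def)
  qed
  moreover have "((\<lambda>_. 0::'b) has_derivative (\<lambda>_. 0)) (at 0)" by (rule has_derivative_const)
  ultimately show ?thesis using has_derivative_unique by blast
qed

lemma vd_comp:
  assumes "(u has_vector_derivative w) (at 0)" "(f has_derivative f') (at (u 0))"
  shows "((\<lambda>t. f (u t)) has_vector_derivative f' w) (at 0)"
proof -
  have l: "linear f'" using assms(2) has_derivative_linear by blast
  have "((\<lambda>t. f (u t)) has_derivative (\<lambda>s. f' (s *\<^sub>R w))) (at 0)"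
    using has_derivative_compose[OF assms(1)[unfolded has_vector_derivative_def] assms(2)] .
  moreover have "(\<lambda>s. f' (s *\<^sub>R w)) = (\<lambda>s. s *\<^sub>R f' w)" using linear_scale[OF l] by auto
  ultimately show ?thesis unfolding has_vector_derivative_def by simp
qed

lemma line_vd: "((\<lambda>t. u0 + t *\<^sub>R w) has_vector_derivative w) (at 0)"
  unfolding has_vector_derivative_def by (auto intro!: derivative_eq_intros)

context cs begin

definition "dnT = frechet_derivative nT (at u0)"
definition "dnS = frechet_derivative nS (at u0)"
definition "D2 j = frechet_derivative (iter_dd [axis j 1] X) (at u0)"

lemma nT_der: "(nT has_derivative dnT) (at u0)"
  using smooth_diff_at[OF smT openU u0U, of "[]"] frechet_derivative_works unfolding dnT_def by auto

lemma nS_der: "(nS has_derivative dnS) (at u0)"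
  using smooth_diff_at[OF smS openW u0W, of "[]"] frechet_derivative_works unfolding dnS_def by auto

lemma D2_der: "(iter_dd [axis j 1] X has_derivative D2 j) (at u0)"
  using smooth_diff_at[OF smX openU u0U, of "[axis j 1]"] frechet_derivative_works unfolding D2_def
  by blast

lemma lin_dnT: "linear dnT" using nT_der has_derivative_linear by blast
lemma lin_dnS: "linear dnS" using nS_der has_derivative_linear by blast

lemma Gj_eq: "iter_dd [axis j 1] X u = Xi u j"
  by (simp add: Xi_def Xd_def)

lemma curve_constraint:
  fixes \<gamma> :: "real \<Rightarrow> (real^'s) \<times> (real^('n option))"
  assumes gd: "(\<gamma> has_vector_derivative (w, b)) (at 0)" and g0: "\<gamma> 0 = (u0, \<xi>0)"
    and e: "e > 0" and inside: "\<And>t. \<bar>t\<bar> < e \<Longrightarrow> fst (\<gamma> t) \<in> U \<and> snd (\<gamma> t) \<in> normsp X (fst (\<gamma> t))"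
  shows "lor b (Xi u0 j) + lor \<xi>0 (D2 j w) = 0"
proof -
  define Gj where "Gj = iter_dd [axis j 1] X"
  have gd': "(\<gamma> has_derivative (\<lambda>s. s *\<^sub>R (w, b))) (at 0)"
    using gd unfolding has_vector_derivative_def .
  have f1: "((\<lambda>t. fst (\<gamma> t)) has_derivative (\<lambda>s. s *\<^sub>R w)) (at 0)"
    using has_derivative_fst[OF gd'] by simp
  have s1: "((\<lambda>t. snd (\<gamma> t)) has_derivative (\<lambda>s. s *\<^sub>R b)) (at 0)"
    using has_derivative_snd[OF gd'] by simp
  have Gd: "(Gj has_derivative D2 j) (at (fst (\<gamma> 0)))" using D2_der g0 unfolding Gj_def by simp
  have c1: "((\<lambda>t. Gj (fst (\<gamma> t))) has_derivative (\<lambda>s. D2 j (s *\<^sub>R w))) (at 0)"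
    using has_derivative_compose[OF f1 Gd] .
  have hd: "((\<lambda>t. lor (snd (\<gamma> t)) (Gj (fst (\<gamma> t)))) has_derivative
      (\<lambda>s. lor (snd (\<gamma> 0)) (D2 j (s *\<^sub>R w)) + lor (s *\<^sub>R b) (Gj (fst (\<gamma> 0))))) (at 0)"
    using bounded_bilinear.FDERIV[OF bl_lor s1 c1] .
  have "(\<lambda>s. lor (snd (\<gamma> 0)) (D2 j (s *\<^sub>R w)) + lor (s *\<^sub>R b) (Gj (fst (\<gamma> 0)))) = (\<lambda>_. 0)"
  proof (rule zero_deriv[OF hd e])
    fix t :: real assume "\<bar>t\<bar> < e"
    then have "fst (\<gamma> t) \<in> U" "snd (\<gamma> t) \<in> normsp X (fst (\<gamma> t))" using inside by auto
    then show "lor (snd (\<gamma> t)) (Gj (fst (\<gamma> t))) = 0"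
      unfolding Gj_def Gj_eq using normsp_iff by blast
  qed
  then have "lor (snd (\<gamma> 0)) (D2 j (1 *\<^sub>R w)) + lor (1 *\<^sub>R b) (Gj (fst (\<gamma> 0))) = 0"
    by (metis (no_types, lifting))
  then show ?thesis using g0 unfolding Gj_def Gj_eq by (simp add: add.commute)
qed

lemma nS_constraint: "lor (dnS w) (Xi u0 j) + lor \<xi>0 (D2 j w) = 0"
proof -
  obtain d where d: "d > 0" "ball u0 d \<subseteq> W" using openW u0W open_contains_ball by blast
  define e where "e = d / (norm w + 1)"
  have nw: "norm w + 1 > 0" by (smt (verit) norm_ge_zero)
  have e: "e > 0" using d nw unfolding e_def by (simp add: divide_pos_pos)
  define \<gamma> where "\<gamma> t = (u0 + t *\<^sub>R w, nS (u0 + t *\<^sub>R w))" for t :: real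
  have vd1: "((\<lambda>t. nS (u0 + t *\<^sub>R w)) has_vector_derivative dnS w) (at 0)"
    using vd_comp[OF line_vd, of nS dnS] nS_der by simp
  have gd: "(\<gamma> has_vector_derivative (w, dnS w)) (at 0)"
    unfolding \<gamma>_def by (rule has_vector_derivative_Pair[OF line_vd vd1])
  have inW: "u0 + t *\<^sub>R w \<in> W" if "\<bar>t\<bar> < e" for t
  proof -
    have "\<bar>t\<bar> * norm w \<le> \<bar>t\<bar> * (norm w + 1)" by (simp add: mult_left_mono)
    also have "\<dots> < e * (norm w + 1)" using that nw by (intro mult_strict_right_mono) auto
    also have "\<dots> = d" unfolding e_def using nw by simp
    finally have "dist u0 (u0 + t *\<^sub>R w) < d" by (simp add: dist_norm)
    then show ?thesis using d by auto
  qed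
  show ?thesis
  proof (rule curve_constraint[OF gd _ e])
    show "\<gamma> 0 = (u0, \<xi>0)" unfolding \<gamma>_def using nS0 by simp
    fix t :: real assume "\<bar>t\<bar> < e"
    then have "u0 + t *\<^sub>R w \<in> W" by (rule inW)
    then show "fst (\<gamma> t) \<in> U \<and> snd (\<gamma> t) \<in> normsp X (fst (\<gamma> t))"
      unfolding \<gamma>_def using WU nSf unfolding N1fib_def by auto
  qed
qed

lemma TN_pT:
  assumes "(w, b) \<in> tangent_space (N1 U X nT) (u0, \<xi>0)"
  shows "pT b = pT (dnS w)"
proof -
  obtain \<gamma> e where g: "e > 0" "\<gamma> 0 = (u0, \<xi>0)" "\<forall>t\<in>{-e<..<e}. \<gamma> t \<in> N1 U X nT"
    "(\<gamma> has_vector_derivative (w, b)) (at 0)"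
    using assms unfolding tangent_space_def by blast
  have c: "lor b (Xi u0 j) + lor \<xi>0 (D2 j w) = 0" for j
  proof (rule curve_constraint[OF g(4) g(2) g(1)])
    fix t :: real assume "\<bar>t\<bar> < e"
    then have "t \<in> {-e<..<e}" by auto
    then have "\<gamma> t \<in> N1 U X nT" using g(3) by blast
    then show "fst (\<gamma> t) \<in> U \<and> snd (\<gamma> t) \<in> normsp X (fst (\<gamma> t))"
      unfolding N1_def N1fib_def by auto
  qed
  have "lor (b - dnS w) (Xi u0 j) = 0" for j
    using c[of j] nS_constraint[of w j] by (simp add: lor_simps)
  then have "\<forall>j. lor (b - dnS w) (Xi u0 j) = 0" by blast
  then have "b - dnS w \<in> N0" unfolding N0_def using normsp_iff[OF u0U] by blast
  then have "pT (b - dnS w) = 0" by (rule pT_N_0)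
  then show ?thesis using linear_diff[OF lin_pT] by simp
qed

definition "l0 = n0 + \<xi>0"
definition "x0 = l0 $ None"

lemma l0_light: "lor l0 l0 = 0" and l0_n0: "lor l0 n0 = -1"
  unfolding l0_def using n0u xi0u xi0n by (simp_all add: lor_simps lor_sym[of n0 \<xi>0])

lemma x0_nz: "x0 \<noteq> 0"
proof
  assume x: "x0 = 0"
  have "lor l0 l0 = (\<Sum>i\<in>UNIV. (l0 $ Some i)^2)"
    unfolding lor_def using x x0_def by (simp add: power2_eq_square)
  then have "\<forall>i\<in>UNIV. (l0 $ Some i)^2 = 0" using l0_light
    by (simp add: sum_nonneg_eq_0_iff)
  then have "l0 $ i = 0" for i using x x0_def by (cases i) auto
  then have "l0 = 0" by (simp add: vec_eq_iff)
  then show False using l0_n0 by simp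
qed

lemma l0_N: "l0 \<in> N0" unfolding l0_def using n0N xi0N subN0 by (simp add: subspace_add)
lemma pT_l0: "pT l0 = 0" by (rule pT_N_0[OF l0_N])
lemma ee_l0: "ee l0 = 0" unfolding l0_def using linear_add[OF lin_ee] ee_n0 ee_xi0 by simp

lemma dLG: "\<exists>c. frechet_derivative (LGt nT) (at (u0, \<xi>0)) (w, b) = inverse x0 *\<^sub>R (dnT w + b) + c *\<^sub>R l0"
proof -
  define l where "l p = nT (fst p) + snd p" for p :: "(real^'s) \<times> (real^('n option))"
  define l' where "l' h = dnT (fst h) + snd h" for h :: "(real^'s) \<times> (real^('n option))"
  have LG: "LGt nT = (\<lambda>p. inverse (l p $ None) *\<^sub>R l p)"
    unfolding LGt_def tld_def l_def by (auto simp: divide_inverse)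
  have a: "((\<lambda>p. nT (fst p)) has_derivative (\<lambda>h. dnT (fst h))) (at (u0, \<xi>0))"
    using has_derivative_compose[OF has_derivative_fst[OF has_derivative_ident], of nT dnT "(u0, \<xi>0)" UNIV]
      nT_der by simp
  have ld: "(l has_derivative l') (at (u0, \<xi>0))"
    unfolding l_def[abs_def] l'_def[abs_def]
    by (rule has_derivative_add[OF a has_derivative_snd[OF has_derivative_ident]])
  have l0: "l (u0, \<xi>0) = l0" unfolding l_def l0_def n0_def by simp
  have cd: "((\<lambda>p. l p $ None) has_derivative (\<lambda>h. l' h $ None)) (at (u0, \<xi>0))"
    by (rule bounded_linear.has_derivative[OF bounded_linear_vec_nth ld])
  have id: "((\<lambda>p. inverse (l p $ None)) has_derivative
      (\<lambda>h. - (inverse (l (u0, \<xi>0) $ None) * (l' h $ None) * inverse (l (u0, \<xi>0) $ None)))) (at (u0, \<xi>0))"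
    by (rule Deriv.has_derivative_inverse[OF _ cd]) (use l0 x0_nz x0_def in simp)
  have "((\<lambda>p. inverse (l p $ None) *\<^sub>R l p) has_derivative
     (\<lambda>h. inverse (l (u0, \<xi>0) $ None) *\<^sub>R l' h +
          (- (inverse (l (u0, \<xi>0) $ None) * (l' h $ None) * inverse (l (u0, \<xi>0) $ None))) *\<^sub>R l (u0, \<xi>0)))
     (at (u0, \<xi>0))"
    by (rule has_derivative_scaleR[OF id ld])
  then have "frechet_derivative (LGt nT) (at (u0, \<xi>0)) = (\<lambda>h. inverse (l (u0, \<xi>0) $ None) *\<^sub>R l' h +
          (- (inverse (l (u0, \<xi>0) $ None) * (l' h $ None) * inverse (l (u0, \<xi>0) $ None))) *\<^sub>R l (u0, \<xi>0))"
    unfolding LG by (rule frechet_derivative_at[symmetric])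
  then show ?thesis unfolding l0 x0_def[symmetric] l'_def
    by (auto simp: x0_def intro!: exI[of _ "- (inverse (l0 $ None) * (dnT w $ None + b $ None) * inverse (l0 $ None))"])
qed

end


lemma continuous_lor[continuous_intros]:
  "continuous F f \<Longrightarrow> continuous F g \<Longrightarrow> continuous F (\<lambda>x. lor (f x) (g x))"
  using bounded_bilinear.continuous[OF bl_lor] by blast

lemma scale_vd:
  fixes q :: "real \<Rightarrow> 'a::real_normed_vector"
  assumes c: "isCont q 0"
  shows "((\<lambda>t. t *\<^sub>R q t) has_vector_derivative q 0) (at 0)"
  unfolding has_vector_derivative_def has_derivative_iff_norm
proof
  show "bounded_linear (\<lambda>s. s *\<^sub>R q 0)" by (rule bounded_linear_scaleR_left)
  have "(q \<longlongrightarrow> q 0) (at 0)" using c by (simp add: isCont_def)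
  then have "((\<lambda>y. q y - q 0) \<longlongrightarrow> 0) (at 0)" by (rule LIM_zero)
  then have lim: "((\<lambda>y. norm (q y - q 0)) \<longlongrightarrow> 0) (at 0)" by (rule tendsto_norm_zero)
  have ev: "\<forall>\<^sub>F y in at 0. norm (q y - q 0) = norm (y *\<^sub>R q y - 0 *\<^sub>R q 0 - (y - 0) *\<^sub>R q 0) / norm (y - 0)"
    unfolding eventually_at_filter
  proof (rule always_eventually, intro allI impI)
    fix y :: real assume "y \<noteq> 0"
    have "y *\<^sub>R q y - 0 *\<^sub>R q 0 - (y - 0) *\<^sub>R q 0 = y *\<^sub>R (q y - q 0)" by (simp add: algebra_simps)
    then show "norm (q y - q 0) = norm (y *\<^sub>R q y - 0 *\<^sub>R q 0 - (y - 0) *\<^sub>R q 0) / norm (y - 0)"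
      using \<open>y \<noteq> 0\<close> by simp
  qed
  show "((\<lambda>y. norm (y *\<^sub>R q y - 0 *\<^sub>R q 0 - (y - 0) *\<^sub>R q 0) / norm (y - 0)) \<longlongrightarrow> 0) (at 0)"
    using tendsto_cong[OF ev] lim by blast
qed

lemma isCont_line:
  fixes u0 w :: "'a::real_normed_vector"
  assumes "isCont g u0"
  shows "isCont (\<lambda>t. g (u0 + t *\<^sub>R w)) (0::real)"
proof -
  have "isCont (\<lambda>t. u0 + t *\<^sub>R w) (0::real)"
    by (rule has_vector_derivative_continuous[OF line_vd])
  moreover have "isCont g (u0 + (0::real) *\<^sub>R w)" using assms by simp
  ultimately show ?thesis by (rule isCont_o2)
qed

context cs begin

lemma isCont_Xi: "isCont (\<lambda>u. Xi u i) u0"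
proof -
  have "isCont (iter_dd [axis i 1] X) u0" using D2_der has_derivative_continuous by blast
  then show ?thesis unfolding Gj_eq .
qed

lemma isCont_nT: "isCont nT u0" using nT_der has_derivative_continuous by blast
lemma isCont_nS: "isCont nS u0" using nS_der has_derivative_continuous by blast

lemma curve_exists:
  assumes y: "y \<in> E0"
  shows "\<exists>d. (w, dnS w + y + d *\<^sub>R \<xi>0) \<in> tangent_space (N1 U X nT) (u0, \<xi>0)"
proof -
  define u where "u t = u0 + t *\<^sub>R w" for t :: real
  define tq where "tq t = (\<Sum>k\<in>UNIV. cc (u t) y $ k *\<^sub>R Xi (u t) k)" for t
  define z where "z t = y - tq t" for t
  define q where "q t = z t + lor (z t) (nT (u t)) *\<^sub>R nT (u t)" for t
  define \<zeta> where "\<zeta> t = nS (u t) + t *\<^sub>R q t" for t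
  define r where "r t = lor (\<zeta> t) (\<zeta> t)" for t
  define s where "s t = inverse (sqrt (r t))" for t
  define \<xi> where "\<xi> t = s t *\<^sub>R \<zeta> t" for t
  have u0: "u 0 = u0" unfolding u_def by simp
  have cXi: "isCont (\<lambda>t. Xi (u t) i) 0" for i unfolding u_def by (rule isCont_line[OF isCont_Xi])
  have cnT: "isCont (\<lambda>t. nT (u t)) 0" unfolding u_def by (rule isCont_line[OF isCont_nT])
  have cnS: "isCont (\<lambda>t. nS (u t)) 0" unfolding u_def by (rule isCont_line[OF isCont_nS])
  have cG: "isCont (\<lambda>t. det (G (u t))) 0"
    unfolding G_def by (intro continuous_det) (simp add: cXi continuous_intros)
  have cM: "isCont (\<lambda>t. det (\<chi> i j. if j = k then rr (u t) y $ i else G (u t) $ i $ j)) 0" for k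
  proof (intro continuous_det)
    fix i j
    show "isCont (\<lambda>t. (\<chi> i j. if j = k then rr (u t) y $ i else G (u t) $ i $ j) $ i $ j) 0"
      by (cases "j = k") (simp_all add: rr_def G_def cXi continuous_intros)
  qed
  have dG0: "det (G (u 0)) \<noteq> 0" unfolding u0 by (rule detG[OF u0U])
  have ccc: "isCont (\<lambda>t. cc (u t) y $ k) 0" for k
    unfolding cc_def by (simp add: cM cG dG0)
  have ctq: "isCont tq 0" unfolding tq_def by (intro continuous_intros ccc cXi)
  have cq: "isCont q 0" unfolding q_def z_def by (intro continuous_intros ctq cnT)
  have tq0: "tq 0 = 0"
  proof -
    have "tq 0 = tp u0 y" unfolding tq_def u0 by (rule tp_sum[OF u0U, symmetric])
    also have "\<dots> = pT y" unfolding pT_def ..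
    also have "\<dots> = 0" by (rule pT_N_0[OF E0_N0[OF y]])
    finally show ?thesis .
  qed
  have yn0: "lor y n0 = 0" using y unfolding E0_def by simp
  have q0: "q 0 = y" unfolding q_def z_def tq0 u0 using yn0 unfolding n0_def by simp
  have \<zeta>0: "\<zeta> 0 = \<xi>0" unfolding \<zeta>_def u0 nS0 by simp
  have r0: "r 0 = 1" unfolding r_def \<zeta>0 by (rule xi0u)
  have s0: "s 0 = 1" unfolding s_def r0 by simp
  have \<xi>0': "\<xi> 0 = \<xi>0" unfolding \<xi>_def s0 \<zeta>0 by simp
  have vdu: "(u has_vector_derivative w) (at 0)" unfolding u_def[abs_def] by (rule line_vd)
  have vdnS: "((\<lambda>t. nS (u t)) has_vector_derivative dnS w) (at 0)"
    using vd_comp[OF vdu, of nS dnS] nS_der u0 by simp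
  have vdq: "((\<lambda>t. t *\<^sub>R q t) has_vector_derivative y) (at 0)"
    using scale_vd[OF cq] q0 by simp
  have vdz: "(\<zeta> has_vector_derivative (dnS w + y)) (at 0)"
    unfolding \<zeta>_def[abs_def] by (rule has_vector_derivative_add[OF vdnS vdq])
  have vdr: "(r has_vector_derivative (lor (\<zeta> 0) (dnS w + y) + lor (dnS w + y) (\<zeta> 0))) (at 0)"
    unfolding r_def[abs_def] by (rule bounded_bilinear.has_vector_derivative[OF bl_lor vdz vdz])
  then obtain dr where dr: "(r has_field_derivative dr) (at 0)"
    unfolding has_real_derivative_iff_has_vector_derivative by blast
  have "(sqrt has_field_derivative inverse (sqrt (r 0)) / 2) (at (r 0))"
    by (rule DERIV_real_sqrt) (simp add: r0)
  then have "((\<lambda>t. sqrt (r t)) has_field_derivative (inverse (sqrt (r 0)) / 2 * dr)) (at 0)"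
    by (rule DERIV_chain2[OF _ dr])
  then have sd: "(s has_field_derivative (- ((inverse (sqrt (r 0)) / 2 * dr) * inverse (sqrt (r 0) ^ Suc (Suc 0))))) (at 0)"
    unfolding s_def[abs_def] by (rule DERIV_inverse_fun) (simp add: r0)
  define d where "d = - ((inverse (sqrt (r 0)) / 2 * dr) * inverse (sqrt (r 0) ^ Suc (Suc 0)))"
  have vdxi: "(\<xi> has_vector_derivative (s 0 *\<^sub>R (dnS w + y) + d *\<^sub>R \<zeta> 0)) (at 0)"
    unfolding \<xi>_def[abs_def] d_def by (rule has_vector_derivative_scaleR[OF sd vdz])
  then have vdxi': "(\<xi> has_vector_derivative (dnS w + y + d *\<^sub>R \<xi>0)) (at 0)"
    unfolding s0 \<zeta>0 by simp
  have vdg: "((\<lambda>t. (u t, \<xi> t)) has_vector_derivative (w, dnS w + y + d *\<^sub>R \<xi>0)) (at 0)"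
    by (rule has_vector_derivative_Pair[OF vdu vdxi'])
  have cu: "isCont u 0" unfolding u_def[abs_def]
    by (rule has_vector_derivative_continuous[OF line_vd])
  have cr: "isCont r 0" using dr by (rule DERIV_isCont)
  have ev1: "\<forall>\<^sub>F t in nhds 0. u t \<in> W"
  proof -
    have "(u \<longlongrightarrow> u 0) (nhds 0)" using cu by (simp add: isCont_def tendsto_at_iff_tendsto_nhds)
    then show ?thesis using topological_tendstoD[OF _ openW] u0 u0W by simp
  qed
  have ev2: "\<forall>\<^sub>F t in nhds 0. r t \<in> {0<..}"
  proof -
    have "(r \<longlongrightarrow> r 0) (nhds 0)" using cr by (simp add: isCont_def tendsto_at_iff_tendsto_nhds)
    then show ?thesis using topological_tendstoD[OF _ open_greaterThan, of r "r 0" _ 0] r0 by simp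
  qed
  obtain e where e: "e > 0" "\<And>t. dist t 0 < e \<Longrightarrow> u t \<in> W \<and> r t \<in> {0<..}"
    using eventually_conj[OF ev1 ev2] unfolding eventually_nhds_metric by blast
  have inN1: "(u t, \<xi> t) \<in> N1 U X nT" if t: "t \<in> {-e<..<e}" for t
  proof -
    have "dist t 0 < e" using t by (simp add: dist_real_def abs_less_iff)
    then have uW: "u t \<in> W" and rp: "r t > 0" using e by auto
    have uU: "u t \<in> U" using uW WU by blast
    have "tq t = tp (u t) y" unfolding tq_def by (rule tp_sum[OF uU, symmetric])
    then have zN: "z t \<in> normsp X (u t)" unfolding z_def using tp_normal[OF uU] by simp
    have nTN: "nT (u t) \<in> normsp X (u t)" by (rule nTn[OF uU])
    have qN: "q t \<in> normsp X (u t)" unfolding q_def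
      by (intro subspace_add[OF subspace_normsp] subspace_scale[OF subspace_normsp] zN nTN)
    have qn: "lor (q t) (nT (u t)) = 0" unfolding q_def using nTu[OF uU] by (simp add: lor_simps)
    have nSF: "nS (u t) \<in> N1fib X nT (u t)" by (rule nSf[OF uW])
    have \<zeta>N: "\<zeta> t \<in> normsp X (u t)" unfolding \<zeta>_def using nSF qN unfolding N1fib_def
      by (intro subspace_add[OF subspace_normsp] subspace_scale[OF subspace_normsp]) auto
    have \<zeta>n: "lor (\<zeta> t) (nT (u t)) = 0" unfolding \<zeta>_def using nSF qn unfolding N1fib_def
      by (simp add: lor_simps)
    have \<xi>N: "\<xi> t \<in> normsp X (u t)" unfolding \<xi>_def
      by (rule subspace_scale[OF subspace_normsp \<zeta>N])
    have \<xi>n: "lor (\<xi> t) (nT (u t)) = 0" unfolding \<xi>_def using \<zeta>n by (simp add: lor_simps)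
    have sq: "sqrt (r t) * sqrt (r t) = r t" using rp by simp
    have sp: "sqrt (r t) > 0" using rp by simp
    have "lor (\<xi> t) (\<xi> t) = s t * s t * r t" unfolding \<xi>_def r_def by (simp add: lor_simps)
    also have "\<dots> = 1" unfolding s_def using sq sp by (simp add: field_simps)
    finally have \<xi>u: "lor (\<xi> t) (\<xi> t) = 1" .
    show ?thesis unfolding N1_def N1fib_def using uU \<xi>N \<xi>n \<xi>u by simp
  qed
  have "(w, dnS w + y + d *\<^sub>R \<xi>0) \<in> tangent_space (N1 U X nT) (u0, \<xi>0)"
    unfolding tangent_space_def
    by (rule CollectI, rule exI[of _ "\<lambda>t. (u t, \<xi> t)"], rule exI[of _ e])
      (use e(1) u0 \<xi>0' inN1 vdg in auto)
  then show ?thesis by blast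
qed

end


context cs begin

lemma pT_idem: "pT (pT y) = pT y" by (rule pT_T_id[OF pT_T])
lemma pT_ee: "pT (ee y) = 0" by (rule pT_N_0[OF E0_N0[OF ee_E]])
lemma ee_pT: "ee (pT y) = 0" by (rule ee_T[OF pT_T])
lemma ee_idem: "ee (ee y) = ee y" by (rule ee_E_id[OF ee_E])

lemma V0_dec: assumes "x \<in> V0" obtains a \<eta> where "a \<in> T0" "\<eta> \<in> E0" "x = a + \<eta>" "pT x = a" "ee x = \<eta>"
proof -
  obtain a \<eta> where a: "a \<in> T0" "\<eta> \<in> E0" "x = a + \<eta>" using assms unfolding V0_def by blast
  have "pT x = a" using a pT_T_id[OF a(1)] pT_N_0[OF E0_N0[OF a(2)]] linear_add[OF lin_pT] by simp
  moreover have "ee x = \<eta>" using a ee_T[OF a(1)] ee_E_id[OF a(2)] linear_add[OF lin_ee] by simp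
  ultimately show ?thesis using a that by blast
qed

lemma T0_V0: "a \<in> T0 \<Longrightarrow> a \<in> V0" unfolding V0_def using subE0 subspace_0 by force
lemma E0_V0: "\<eta> \<in> E0 \<Longrightarrow> \<eta> \<in> V0" unfolding V0_def using subT0 subspace_0 by force

lemma main: "K_l X nT nS u0 = 0 \<longleftrightarrow> Kt_l U X nT u0 \<xi>0 = 0"
proof -
  obtain Li where Li: "linear Li" "Li \<circ> Xd u0 = id"
    using linear_injective_left_inverse[OF linXd[OF u0U] injX[OF u0U]] by blast
  have LiX: "Li (Xd u0 w) = w" for w using Li(2) by (metis comp_apply id_apply)
  have T0r: "a \<in> T0 \<Longrightarrow> Xd u0 (Li a) = a" for a unfolding T0_def tang_eq using LiX by auto
  have invX: "a \<in> T0 \<Longrightarrow> inv (Xd u0) a = Li a" for a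
    unfolding T0_def tang_eq using LiX injX[OF u0U] by (auto simp: inv_f_f)
  have Dsum: "frechet_derivative (\<lambda>v. nT v + nS v) (at u0) = (\<lambda>w. dnT w + dnS w)"
    by (rule frechet_derivative_at[symmetric]) (rule has_derivative_add[OF nT_der nS_der])
  have piT: "proj_along T0 N0 = pT" by (rule ext) (rule piT_eq)
  define FK where "FK a = - pT (dnT (Li a) + dnS (Li a))" for a
  have linFK: "linear FK" unfolding FK_def
  proof (rule linearI)
    fix x y show "- pT (dnT (Li (x + y)) + dnS (Li (x + y))) = - pT (dnT (Li x) + dnS (Li x)) + - pT (dnT (Li y) + dnS (Li y))"
      by (simp add: linear_add[OF Li(1)] linear_add[OF lin_dnT] linear_add[OF lin_dnS] linear_add[OF lin_pT])
  next
    fix c :: real and x show "- pT (dnT (Li (c *\<^sub>R x)) + dnS (Li (c *\<^sub>R x))) = c *\<^sub>R - pT (dnT (Li x) + dnS (Li x))"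
      by (simp add: linear_scale[OF Li(1)] linear_scale[OF lin_dnT] linear_scale[OF lin_dnS]
          linear_scale[OF lin_pT] flip: scaleR_add_right)
  qed
  have FKT: "FK a \<in> T0" for a unfolding FK_def using pT_T subT0 by (simp add: subspace_neg)
  have K: "K_l X nT nS u0 = det_on T0 (\<lambda>a. - pT (dnT (inv (Xd u0) a) + dnS (inv (Xd u0) a)))"
    unfolding K_l_def Let_def T0_def[symmetric] N0_def[symmetric] piT Dsum Xd_def[symmetric] ..
  have K0: "K_l X nT nS u0 = 0 \<longleftrightarrow> (\<exists>a\<in>T0. a \<noteq> 0 \<and> FK a = 0)"
    unfolding K by (rule det_on_zero_iff[OF subT0 linFK FKT]) (simp add: FK_def invX)
  define TN where "TN = tangent_space (N1 U X nT) (u0, \<xi>0)"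
  define iota where "iota = (\<lambda>(w, b). Xd u0 w + ee b)"
  define dLGf where "dLGf = frechet_derivative (LGt nT) (at (u0, \<xi>0))"
  have Eeq: "{\<eta>. \<eta> \<in> normsp X u0 \<and> lor \<eta> \<xi>0 = 0 \<and> lor \<eta> (nT u0) = 0} = E0"
    unfolding E0_def N0_def n0_def ..
  have Veq: "{a + \<eta> |a \<eta>. a \<in> tang X u0 \<and> \<eta> \<in> E0} = V0" unfolding V0_def T0_def ..
  have projEeq: "proj_along E0 {y. \<forall>e\<in>E0. lor y e = 0} = ee" by (rule ext) (rule projE_eq)
  have PiTeq: "proj_along V0 (span {nT u0, \<xi>0}) = (\<lambda>y. pT y + ee y)"
    by (rule ext) (unfold n0_def[symmetric], rule PiT_eq)
  have iotaeq: "(\<lambda>(w, b). frechet_derivative X (at u0) w + ee b) = iota" unfolding iota_def Xd_def ..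
  have Kt: "Kt_l U X nT u0 \<xi>0 = det_on V0 (\<lambda>x. - (pT (dLGf (inv_into TN iota x)) + ee (dLGf (inv_into TN iota x))))"
    unfolding Kt_l_def Let_def Eeq projEeq Veq PiTeq iotaeq TN_def[symmetric] dLGf_def[symmetric] ..
  define FF where "FF x = - (inverse x0 *\<^sub>R (pT (dnT (Li (pT x))) + pT (dnS (Li (pT x))) + ee (dnT (Li (pT x))) + ee x))" for x
  have linFF: "linear FF" unfolding FF_def
  proof (rule linearI)
    fix x y show "- (inverse x0 *\<^sub>R (pT (dnT (Li (pT (x + y)))) + pT (dnS (Li (pT (x + y)))) + ee (dnT (Li (pT (x + y)))) + ee (x + y))) =
      - (inverse x0 *\<^sub>R (pT (dnT (Li (pT x))) + pT (dnS (Li (pT x))) + ee (dnT (Li (pT x))) + ee x)) +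
      - (inverse x0 *\<^sub>R (pT (dnT (Li (pT y))) + pT (dnS (Li (pT y))) + ee (dnT (Li (pT y))) + ee y))"
      by (simp add: linear_add[OF Li(1)] linear_add[OF lin_dnT] linear_add[OF lin_dnS]
          linear_add[OF lin_pT] linear_add[OF lin_ee] scaleR_add_right algebra_simps)
  next
    fix c :: real and x show "- (inverse x0 *\<^sub>R (pT (dnT (Li (pT (c *\<^sub>R x)))) + pT (dnS (Li (pT (c *\<^sub>R x)))) + ee (dnT (Li (pT (c *\<^sub>R x)))) + ee (c *\<^sub>R x))) =
      c *\<^sub>R - (inverse x0 *\<^sub>R (pT (dnT (Li (pT x))) + pT (dnS (Li (pT x))) + ee (dnT (Li (pT x))) + ee x))"
      by (simp add: linear_scale[OF Li(1)] linear_scale[OF lin_dnT] linear_scale[OF lin_dnS]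
          linear_scale[OF lin_pT] linear_scale[OF lin_ee] scaleR_add_right algebra_simps)
  qed
  have FFV: "FF x \<in> V0" for x
  proof -
    have "pT (dnT (Li (pT x))) + pT (dnS (Li (pT x))) \<in> T0" using pT_T subT0 by (simp add: subspace_add)
    moreover have "ee (dnT (Li (pT x))) + ee x \<in> E0" using ee_E subE0 by (simp add: subspace_add)
    ultimately have "(pT (dnT (Li (pT x))) + pT (dnS (Li (pT x)))) + (ee (dnT (Li (pT x))) + ee x) \<in> V0"
      unfolding V0_def by blast
    then show ?thesis unfolding FF_def using subV0
      by (simp add: subspace_neg subspace_scale add.assoc)
  qed
  have surj: "x \<in> iota ` TN" if x: "x \<in> V0" for x
  proof -
    obtain a \<eta> where a: "a \<in> T0" "\<eta> \<in> E0" "x = a + \<eta>" using V0_dec[OF x] by blast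
    obtain w where w: "a = Xd u0 w" using a(1) unfolding T0_def tang_eq by blast
    define \<eta>' where "\<eta>' = \<eta> - ee (dnS w)"
    have \<eta>': "\<eta>' \<in> E0" unfolding \<eta>'_def using a(2) ee_E subE0 by (simp add: subspace_diff)
    obtain d where d: "(w, dnS w + \<eta>' + d *\<^sub>R \<xi>0) \<in> TN" using curve_exists[OF \<eta>'] unfolding TN_def by blast
    have "iota (w, dnS w + \<eta>' + d *\<^sub>R \<xi>0) = Xd u0 w + (ee (dnS w) + \<eta>')"
      unfolding iota_def using ee_E_id[OF \<eta>'] ee_xi0
      by (simp add: linear_add[OF lin_ee] linear_scale[OF lin_ee])
    also have "\<dots> = x" unfolding \<eta>'_def a(3) w by simp
    finally show ?thesis using d by (metis image_eqI)
  qed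
  have fF: "- (pT (dLGf (inv_into TN iota x)) + ee (dLGf (inv_into TN iota x))) = FF x" if x: "x \<in> V0" for x
  proof -
    obtain w b where p: "inv_into TN iota x = (w, b)" by (cases "inv_into TN iota x") auto
    have pTN: "(w, b) \<in> TN" using inv_into_into[OF surj[OF x]] p by simp
    have ix: "iota (w, b) = x" using f_inv_into_f[OF surj[OF x]] p by simp
    then have xe: "x = Xd u0 w + ee b" unfolding iota_def by simp
    have XT: "Xd u0 w \<in> T0" unfolding T0_def tang_eq by simp
    have pTx: "pT x = Xd u0 w" unfolding xe using pT_T_id[OF XT] pT_ee linear_add[OF lin_pT] by simp
    have eex: "ee x = ee b" unfolding xe using ee_T[OF XT] ee_idem linear_add[OF lin_ee] by simp
    have pb: "pT b = pT (dnS w)" using TN_pT pTN unfolding TN_def by blast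
    obtain c where c: "dLGf (w, b) = inverse x0 *\<^sub>R (dnT w + b) + c *\<^sub>R l0"
      using dLG unfolding dLGf_def by blast
    have "pT (dLGf (w, b)) = inverse x0 *\<^sub>R (pT (dnT w) + pT (dnS w))"
      unfolding c using pb pT_l0 by (simp add: linear_add[OF lin_pT] linear_scale[OF lin_pT])
    moreover have "ee (dLGf (w, b)) = inverse x0 *\<^sub>R (ee (dnT w) + ee b)"
      unfolding c using ee_l0 by (simp add: linear_add[OF lin_ee] linear_scale[OF lin_ee])
    ultimately show ?thesis unfolding p FF_def pTx eex LiX by (simp add: scaleR_add_right algebra_simps)
  qed
  have Kt0: "Kt_l U X nT u0 \<xi>0 = 0 \<longleftrightarrow> (\<exists>x\<in>V0. x \<noteq> 0 \<and> FF x = 0)"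
    unfolding Kt by (rule det_on_zero_iff[OF subV0 linFF FFV fF])
  have x0i: "inverse x0 \<noteq> 0" using x0_nz by simp
  have "(\<exists>a\<in>T0. a \<noteq> 0 \<and> FK a = 0) \<longleftrightarrow> (\<exists>x\<in>V0. x \<noteq> 0 \<and> FF x = 0)"
  proof
    assume "\<exists>a\<in>T0. a \<noteq> 0 \<and> FK a = 0"
    then obtain a where a: "a \<in> T0" "a \<noteq> 0" "FK a = 0" by blast
    define x where "x = a - ee (dnT (Li a))"
    have xV: "x \<in> V0" unfolding x_def using T0_V0[OF a(1)] E0_V0[OF ee_E] subV0 by (simp add: subspace_diff)
    have pTx: "pT x = a" unfolding x_def using pT_T_id[OF a(1)] pT_ee linear_diff[OF lin_pT] by simp
    have eex: "ee x = - ee (dnT (Li a))" unfolding x_def using ee_T[OF a(1)] ee_idem linear_diff[OF lin_ee] by simp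
    have h: "pT (dnT (Li a) + dnS (Li a)) = 0" using a(3) unfolding FK_def by simp
    have "pT (dnT (Li a)) + pT (dnS (Li a)) = 0"
      using h linear_add[OF lin_pT, of "dnT (Li a)" "dnS (Li a)"] by simp
    then have "FF x = 0" unfolding FF_def pTx eex by simp
    moreover have "x \<noteq> 0" using pTx a(2) linear_0[OF lin_pT] by auto
    ultimately show "\<exists>x\<in>V0. x \<noteq> 0 \<and> FF x = 0" using xV by blast
  next
    assume "\<exists>x\<in>V0. x \<noteq> 0 \<and> FF x = 0"
    then obtain x where x: "x \<in> V0" "x \<noteq> 0" "FF x = 0" by blast
    obtain a \<eta> where a: "a \<in> T0" "\<eta> \<in> E0" "x = a + \<eta>" "pT x = a" "ee x = \<eta>" using V0_dec[OF x(1)] by blast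
    have S: "pT (dnT (Li a)) + pT (dnS (Li a)) + ee (dnT (Li a)) + \<eta> = 0"
      using x(3) x0i unfolding FF_def a(4) a(5) by simp
    have "pT (pT (dnT (Li a)) + pT (dnS (Li a)) + ee (dnT (Li a)) + \<eta>) = 0" using S linear_0[OF lin_pT] by simp
    then have P: "pT (dnT (Li a)) + pT (dnS (Li a)) = 0"
      using pT_N_0[OF E0_N0[OF a(2)]] by (simp add: linear_add[OF lin_pT] pT_idem pT_ee)
    have "ee (pT (dnT (Li a)) + pT (dnS (Li a)) + ee (dnT (Li a)) + \<eta>) = 0" using S linear_0[OF lin_ee] by simp
    then have Q: "ee (dnT (Li a)) + \<eta> = 0"
      using ee_E_id[OF a(2)] by (simp add: linear_add[OF lin_ee] ee_pT ee_idem)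
    have "a \<noteq> 0"
    proof
      assume "a = 0"
      then have "\<eta> = 0" using Q linear_0[OF Li(1)] linear_0[OF lin_dnT] linear_0[OF lin_ee] by simp
      then show False using x(2) a(3) \<open>a = 0\<close> by simp
    qed
    moreover have "FK a = 0" unfolding FK_def using P by (simp add: linear_add[OF lin_pT])
    ultimately show "\<exists>a\<in>T0. a \<noteq> 0 \<and> FK a = 0" using a(1) by blast
  qed
  then show ?thesis using K0 Kt0 by blast
qed

end

theorem corollary4p2:
  fixes U :: "(real ^ 's::finite) set"
    and X :: "real ^ 's \<Rightarrow> real ^ ('n::finite option)"
    and nT nS :: "real ^ 's \<Rightarrow> real ^ ('n option)"
    and W :: "(real ^ 's) set"
    and u0 :: "real ^ 's"
    and \<xi>0 :: "real ^ ('n option)"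
  assumes "spacelike_embedding U X"
    and "future_unit_timelike_normal U X nT"
    and "u0 \<in> U"
    and "\<xi>0 \<in> N1fib X nT u0"
    and "local_section U X nT W nS"
    and "u0 \<in> W"
    and "nS u0 = \<xi>0"
  shows "K_l X nT nS u0 = 0 \<longleftrightarrow> Kt_l U X nT u0 \<xi>0 = 0"
proof -
  interpret cs U X nT nS W u0 \<xi>0
    by (unfold_locales) (fact assms)+
  show ?thesis by (rule main)
qed

end
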